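(* Assume that $\widetilde{\mathbb{C}}_e$ and $\widetilde{\mathbb{L}}_{aniso}$ are positive definite, $\widetilde{\mathbb{C}}_{micro}$ and $\widetilde{\mathbb{C}}_c$ are positive semi-definite and bounded, and $\rho,J,L_c,\mu>0$. Then there is a constant $c>0$ such that $$\mathcal{W}_1\big((\varphi,\Phi),(\varphi,\Phi)\big)\ge c\left(\|\varphi\|^2_{H^1(\Omega)}+\|\Phi\|^2_{L^2(\Omega)}+\|\mathrm{Curl}\,\Phi\|^2_{L^2(\Omega)}\right)$$ for all $(\varphi,\Phi)\in H_0^1(\Omega)\times H_0(\mathrm{Curl};\Omega)$.
   Context: $\Omega\subset\mathbb{R}^3$ is a bounded domain with piecewise smooth boundary. For $X\in\mathbb{R}^{3\times3}$, $\mathrm{sym}\,X=\frac12(X+X^T)$, $\mathrm{skew}\,X=\frac12(X-X^T)$, $\langle X,Y\rangle=\mathrm{tr}(XY^T)$, $\|X\|^2=\langle X,X\rangle$. $H_0^1(\Omega)$ denotes $\mathbb{R}^3$-valued fields with components in $H^1_0(\Omega)$; $\mathrm{Curl}\,P$ is the row-wise curl of $P:\Omega\to\mathbb{R}^{3\times3}$, and $H_0(\mathrm{Curl};\Omega)$ is the closure of $C_0^\infty(\Omega;\mathbb{R}^{3\times3})$ in the norm $(\|P\|^2_{L^2}+\|\mathrm{Curl}\,P\|^2_{L^2})^{1/2}$. For a constant fourth-order tensor $\mathbb{C}$, $(\mathbb{C}.X)_{ij}=\mathbb{C}_{ijkl}X_{kl}$. $\widetilde{\mathbb{C}}_e,\widetilde{\mathbb{C}}_{micro}$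 act on $\mathrm{Sym}(3)$ with $\mathbb{C}_{ijrs}=\mathbb{C}_{rsij}=\mathbb{C}_{jirs}$; $\widetilde{\mathbb{C}}_c$ acts on $\mathfrak{so}(3)$ with $\mathbb{C}_{ijrs}=-\mathbb{C}_{jirs}=\mathbb{C}_{rsij}$; $\widetilde{\mathbb{L}}_{aniso}$ acts on $\mathbb{R}^{3\times3}$ with $\mathbb{L}_{ijrs}=\mathbb{L}_{rsij}$. Positive definite means $m\|X\|^2\le\langle\mathbb{C}.X,X\rangle\le M\|X\|^2$ with $0<m\le M$ on the relevant domain; positive semi-definite and bounded means $0\le\langle\mathbb{C}.X,X\rangle\le M\|X\|^2$. $\mathcal{W}_1((u,P),(\varphi,\Phi))=\int_\Omega\big(\rho\langle u,\varphi\rangle+J\langle P,\Phi\rangle+\langle\widetilde{\mathbb{C}}_e.\mathrm{sym}(\nabla u-P),\mathrm{sym}(\nabla\varphi-\Phi)\rangle+\langle\widetilde{\mathbb{C}}_c.\mathrm{skew}(\nabla u-P),\mathrm{skew}(\nabla\varphi-\Phi)\rangle+\langle\widetilde{\mathbb{C}}_{micro}.\mathrm{sym}P,\mathrm{sym}\Phi\rangle+\mu L_c^2\langle\widetilde{\mathbb{L}}_{aniso}.\mathrm{Curl}P,\mathrm{Curl}\Phi\rangle\big)dx$. *)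

theory Defs
  imports "HOL-Analysis.Analysis"
begin

type_synonym vec3 = "real^3"
type_synonym mat3 = "real^3^3"
type_synonym tensor4 = "3 \<Rightarrow> 3 \<Rightarrow> 3 \<Rightarrow> 3 \<Rightarrow> real"

definition symm :: "mat3 \<Rightarrow> mat3" where
  "symm X = (1/2) *\<^sub>R (X + transpose X)"

definition skew :: "mat3 \<Rightarrow> mat3" where
  "skew X = (1/2) *\<^sub>R (X - transpose X)"

text \<open>Sym(3), so(3), and the action (C.X)_ij = C_ijkl X_kl.  The Frobenius inner product
  tr(X Y^T) is the inner product of real^3^3, and the norm is the Frobenius norm.\<close>

definition Sym3 :: "mat3 set" where "Sym3 = {X. transpose X = X}"
definition so3 :: "mat3 set" where "so3 = {X. transpose X = - X}"

definition tact :: "tensor4 \<Rightarrow> mat3 \<Rightarrow> mat3" where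
  "tact C X = (\<chi> i j. \<Sum>k\<in>UNIV. \<Sum>l\<in>UNIV. C i j k l * X $ k $ l)"

definition pos_def_on :: "mat3 set \<Rightarrow> tensor4 \<Rightarrow> bool" where
  "pos_def_on S C \<longleftrightarrow> (\<exists>m M. 0 < m \<and> m \<le> M \<and>
      (\<forall>X\<in>S. m * (norm X)\<^sup>2 \<le> tact C X \<bullet> X \<and> tact C X \<bullet> X \<le> M * (norm X)\<^sup>2))"

definition psd_bounded_on :: "mat3 set \<Rightarrow> tensor4 \<Rightarrow> bool" where
  "psd_bounded_on S C \<longleftrightarrow> (\<exists>M. \<forall>X\<in>S. 0 \<le> tact C X \<bullet> X \<and> tact C X \<bullet> X \<le> M * (norm X)\<^sup>2)"

definition pdiff :: "(vec3 \<Rightarrow> 'a::real_normed_vector) \<Rightarrow> 3 \<Rightarrow> vec3 \<Rightarrow> 'a" where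
  "pdiff f j x = frechet_derivative f (at x) (axis j 1)"

coinductive smooth :: "(vec3 \<Rightarrow> 'a::real_normed_vector) \<Rightarrow> bool" where
  "continuous_on UNIV f \<Longrightarrow> (\<forall>x. f differentiable (at x)) \<Longrightarrow> (\<forall>j. smooth (pdiff f j))
     \<Longrightarrow> smooth f"

definition test_field :: "vec3 set \<Rightarrow> (vec3 \<Rightarrow> 'a::real_normed_vector) \<Rightarrow> bool" where
  "test_field \<Omega> f \<longleftrightarrow> smooth f \<and> compact (closure {x. f x \<noteq> 0}) \<and> closure {x. f x \<noteq> 0} \<subseteq> \<Omega>"

definition grad :: "(vec3 \<Rightarrow> vec3) \<Rightarrow> vec3 \<Rightarrow> mat3" where
  "grad u x = (\<chi> i j. pdiff u j x $ i)"

definition Curl :: "(vec3 \<Rightarrow> mat3) \<Rightarrow> vec3 \<Rightarrow> mat3" where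
  "Curl P x = (\<chi> i. vector [ pdiff P 2 x $ i $ 3 - pdiff P 3 x $ i $ 2,
                              pdiff P 3 x $ i $ 1 - pdiff P 1 x $ i $ 3,
                              pdiff P 1 x $ i $ 2 - pdiff P 2 x $ i $ 1 ])"

definition L2 :: "vec3 set \<Rightarrow> (vec3 \<Rightarrow> 'a::euclidean_space) \<Rightarrow> bool" where
  "L2 \<Omega> f \<longleftrightarrow> f measurable_on \<Omega> \<and> (\<lambda>x. (norm (f x))\<^sup>2) integrable_on \<Omega>"

definition L2_conv :: "vec3 set \<Rightarrow> (nat \<Rightarrow> vec3 \<Rightarrow> 'a::euclidean_space) \<Rightarrow> (vec3 \<Rightarrow> 'a) \<Rightarrow> bool" where
  "L2_conv \<Omega> fs f \<longleftrightarrow> (\<lambda>n. integral \<Omega> (\<lambda>x. (norm (fs n x - f x))\<^sup>2)) \<longlonglongrightarrow> 0"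

text \<open>An element of H_0^1 is given by the field u together with its gradient D (in L^2),
  obtained as an H^1-limit of smooth compactly supported fields.\<close>

definition H01 :: "vec3 set \<Rightarrow> (vec3 \<Rightarrow> vec3) \<Rightarrow> (vec3 \<Rightarrow> mat3) \<Rightarrow> bool" where
  "H01 \<Omega> u D \<longleftrightarrow> L2 \<Omega> u \<and> L2 \<Omega> D \<and>
     (\<exists>us. (\<forall>n. test_field \<Omega> (us n)) \<and> L2_conv \<Omega> us u \<and> L2_conv \<Omega> (\<lambda>n. grad (us n)) D)"

text \<open>An element of H_0(Curl) is given by P together with its Curl C (in L^2).\<close>

definition H0Curl :: "vec3 set \<Rightarrow> (vec3 \<Rightarrow> mat3) \<Rightarrow> (vec3 \<Rightarrow> mat3) \<Rightarrow> bool" where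
  "H0Curl \<Omega> P C \<longleftrightarrow> L2 \<Omega> P \<and> L2 \<Omega> C \<and>
     (\<exists>Ps. (\<forall>n. test_field \<Omega> (Ps n)) \<and> L2_conv \<Omega> Ps P \<and> L2_conv \<Omega> (\<lambda>n. Curl (Ps n)) C)"

definition W1 :: "vec3 set \<Rightarrow> real \<Rightarrow> real \<Rightarrow> real \<Rightarrow> real \<Rightarrow> tensor4 \<Rightarrow> tensor4 \<Rightarrow> tensor4 \<Rightarrow> tensor4
   \<Rightarrow> (vec3 \<Rightarrow> vec3) \<Rightarrow> (vec3 \<Rightarrow> mat3) \<Rightarrow> (vec3 \<Rightarrow> mat3) \<Rightarrow> (vec3 \<Rightarrow> mat3)
   \<Rightarrow> (vec3 \<Rightarrow> vec3) \<Rightarrow> (vec3 \<Rightarrow> mat3) \<Rightarrow> (vec3 \<Rightarrow> mat3) \<Rightarrow> (vec3 \<Rightarrow> mat3) \<Rightarrow> real" where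
  "W1 \<Omega> \<rho> J \<mu> Lc Ce Cc Cmicro Laniso u Du P CurlP \<phi> D\<phi> \<Phi> Curl\<Phi> =
     integral \<Omega> (\<lambda>x.
        \<rho> * (u x \<bullet> \<phi> x) + J * (P x \<bullet> \<Phi> x)
      + tact Ce (symm (Du x - P x)) \<bullet> symm (D\<phi> x - \<Phi> x)
      + tact Cc (skew (Du x - P x)) \<bullet> skew (D\<phi> x - \<Phi> x)
      + tact Cmicro (symm (P x)) \<bullet> symm (\<Phi> x)
      + \<mu> * Lc\<^sup>2 * (tact Laniso (CurlP x) \<bullet> Curl\<Phi> x))"

end

theory Submission
  imports Defs
begin


lemma norm_mat_sq: "(norm (X::mat3))\<^sup>2 = (\<Sum>i\<in>UNIV. \<Sum>j\<in>UNIV. (X$i$j)\<^sup>2)"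
  unfolding power2_norm_eq_inner by (simp add: inner_vec_def power2_eq_square)

lemma inner_mat: "(X::mat3) \<bullet> Y = (\<Sum>i\<in>UNIV. \<Sum>j\<in>UNIV. X$i$j * Y$i$j)"
  by (simp add: inner_vec_def)

lemma symm_comp: "symm X $ i $ j = (X$i$j + X$j$i)/2"
  by (simp add: symm_def transpose_def)

lemma skew_comp: "skew X $ i $ j = (X$i$j - X$j$i)/2"
  by (simp add: skew_def transpose_def)

lemma symm_Sym3: "symm X \<in> Sym3"
  by (simp add: Sym3_def vec_eq_iff transpose_def symm_comp)

lemma skew_so3: "skew X \<in> so3"
  by (simp add: so3_def vec_eq_iff transpose_def skew_comp field_simps)

lemma two_symm_sq: "2 * (norm (symm X))\<^sup>2 = (norm X)\<^sup>2 + (\<Sum>i\<in>UNIV. \<Sum>j\<in>UNIV. X$i$j * X$j$i)"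
  unfolding norm_mat_sq symm_comp by (simp add: sum_3 power2_eq_square algebra_simps)

lemma norm_transpose_mat: "norm (transpose (X::mat3)) = norm X"
proof -
  have "(norm (transpose X))\<^sup>2 = (norm X)\<^sup>2"
    unfolding norm_mat_sq transpose_def vec_lambda_beta by (rule sum.swap)
  thus ?thesis by (simp add: power2_eq_iff_nonneg)
qed

lemma norm_symm_le: "norm (symm X) \<le> norm X"
proof -
  have "norm (symm X) = (1/2) * norm (X + transpose X)" by (simp add: symm_def)
  also have "\<dots> \<le> (1/2) * (norm X + norm (transpose X))" by (simp add: norm_triangle_ineq)
  finally show ?thesis by (simp add: norm_transpose_mat)
qed

lemma norm_skew_le: "norm (skew X) \<le> norm X"
proof -
  have "norm (skew X) = (1/2) * norm (X - transpose X)" by (simp add: skew_def)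
  also have "\<dots> \<le> (1/2) * (norm X + norm (transpose X))" by (simp add: norm_triangle_ineq4)
  finally show ?thesis by (simp add: norm_transpose_mat)
qed

lemma symm_diff: "symm (X - Y) = symm X - symm Y"
  by (simp add: vec_eq_iff symm_comp field_simps)

lemma symm_lin: "linear symm"
  by (rule linearI) (simp_all add: vec_eq_iff symm_comp field_simps)
lemma skew_lin: "linear skew"
  by (rule linearI) (simp_all add: vec_eq_iff skew_comp field_simps)
lemma tact_lin: "linear (tact C)"
  by (rule linearI) (simp_all add: vec_eq_iff tact_def algebra_simps sum.distrib sum_distrib_left)

lemma abs_sum4: "\<bar>\<Sum>i\<in>UNIV. \<Sum>j\<in>UNIV. \<Sum>k\<in>UNIV. \<Sum>l\<in>UNIV. (a i j k l::real)\<bar>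
   \<le> (\<Sum>i\<in>UNIV. \<Sum>j\<in>UNIV. \<Sum>k\<in>UNIV. \<Sum>l\<in>UNIV. \<bar>a i j k l\<bar>)"
  apply (rule order_trans[OF sum_abs], rule sum_mono)
  apply (rule order_trans[OF sum_abs], rule sum_mono)
  apply (rule order_trans[OF sum_abs], rule sum_mono)
  apply (rule sum_abs)
  done

lemma comp_le_norm: "\<bar>(X::mat3)$k$l\<bar> \<le> norm X"
  by (metis component_le_norm_cart Finite_Cartesian_Product.norm_nth_le order_trans)

lemma tact_bound: "\<bar>tact C X \<bullet> Y\<bar> \<le> (\<Sum>i\<in>UNIV. \<Sum>j\<in>UNIV. \<Sum>k\<in>UNIV. \<Sum>l\<in>UNIV. \<bar>C i j k l\<bar>) * ((norm X)\<^sup>2 + (norm Y)\<^sup>2)"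
proof -
  have "tact C X \<bullet> Y = (\<Sum>i\<in>UNIV. \<Sum>j\<in>UNIV. \<Sum>k\<in>UNIV. \<Sum>l\<in>UNIV. C i j k l * X$k$l * Y$i$j)"
    by (simp only: inner_mat tact_def vec_lambda_beta sum_distrib_right)
  hence "\<bar>tact C X \<bullet> Y\<bar> \<le> (\<Sum>i\<in>UNIV. \<Sum>j\<in>UNIV. \<Sum>k\<in>UNIV. \<Sum>l\<in>UNIV. \<bar>C i j k l * X$k$l * Y$i$j\<bar>)"
    using abs_sum4 by simp
  also have "\<dots> \<le> (\<Sum>i\<in>UNIV. \<Sum>j\<in>UNIV. \<Sum>k\<in>UNIV. \<Sum>l\<in>UNIV. \<bar>C i j k l\<bar> * ((norm X)\<^sup>2 + (norm Y)\<^sup>2))"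
  proof (intro sum_mono)
    fix i j k l
    have "\<bar>X$k$l\<bar> * \<bar>Y$i$j\<bar> \<le> norm X * norm Y"
      using comp_le_norm[of X k l] comp_le_norm[of Y i j] by (simp add: mult_mono')
    also have "\<dots> \<le> (norm X)\<^sup>2 + (norm Y)\<^sup>2"
      using sum_squares_bound[of "norm X" "norm Y"] mult_nonneg_nonneg[OF norm_ge_zero norm_ge_zero, of X Y] by linarith
    finally have "\<bar>X$k$l\<bar> * \<bar>Y$i$j\<bar> \<le> (norm X)\<^sup>2 + (norm Y)\<^sup>2" .
    hence "\<bar>C i j k l\<bar> * (\<bar>X$k$l\<bar> * \<bar>Y$i$j\<bar>) \<le> \<bar>C i j k l\<bar> * ((norm X)\<^sup>2 + (norm Y)\<^sup>2)"
      by (rule mult_left_mono) simp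
    thus "\<bar>C i j k l * X$k$l * Y$i$j\<bar> \<le> \<bar>C i j k l\<bar> * ((norm X)\<^sup>2 + (norm Y)\<^sup>2)"
      by (simp add: abs_mult mult.assoc)
  qed
  also have "\<dots> = (\<Sum>i\<in>UNIV. \<Sum>j\<in>UNIV. \<Sum>k\<in>UNIV. \<Sum>l\<in>UNIV. \<bar>C i j k l\<bar>) * ((norm X)\<^sup>2 + (norm Y)\<^sup>2)"
    by (simp only: sum_distrib_right)
  finally show ?thesis .
qed




lemma smooth_D: "smooth f \<Longrightarrow> continuous_on UNIV f \<and> (\<forall>x. f differentiable (at x)) \<and> (\<forall>j. smooth (pdiff f j))"
  by (erule smooth.cases) auto

lemma line_vderiv:
  fixes f :: "vec3 \<Rightarrow> 'a::real_normed_vector"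
  assumes "\<forall>y. f differentiable (at y)"
  shows "((\<lambda>t. f (x + t *\<^sub>R axis j 1)) has_vector_derivative pdiff f j (x + t *\<^sub>R axis j 1)) (at t)"
proof -
  let ?y = "x + t *\<^sub>R axis j 1"
  have f: "(f has_derivative frechet_derivative f (at ?y)) (at ?y)"
    using assms frechet_derivative_works by blast
  have g: "((\<lambda>t. x + t *\<^sub>R axis j 1) has_derivative (\<lambda>s. s *\<^sub>R axis j 1)) (at t)"
    by (auto intro!: derivative_eq_intros)
  have "((\<lambda>t. f (x + t *\<^sub>R axis j 1)) has_derivative (\<lambda>s. frechet_derivative f (at ?y) (s *\<^sub>R axis j 1))) (at t)"
    using diff_chain_at[OF g f] by (simp add: o_def)
  moreover have "frechet_derivative f (at ?y) (s *\<^sub>R axis j 1) = s *\<^sub>R pdiff f j ?y" for s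
    using has_derivative_linear[OF f] unfolding pdiff_def by (simp add: linear_scale)
  ultimately show ?thesis unfolding has_vector_derivative_def by simp
qed

lemma line_rderiv:
  fixes f :: "vec3 \<Rightarrow> vec3"
  assumes "\<forall>y. f differentiable (at y)"
  shows "((\<lambda>t. f (x + t *\<^sub>R axis j 1) $ i) has_real_derivative (pdiff f j (x + t *\<^sub>R axis j 1) $ i)) (at t)"
proof -
  have "((\<lambda>t. f (x + t *\<^sub>R axis j 1) $ i) has_vector_derivative (pdiff f j (x + t *\<^sub>R axis j 1) $ i)) (at t)"
    using bounded_linear.has_vector_derivative[OF bounded_linear_vec_nth line_vderiv[OF assms]] .
  thus ?thesis by (simp add: has_real_derivative_iff_has_vector_derivative)
qed




lemma int_restrict_eq:
  fixes G :: "vec3 \<Rightarrow> 'a::banach"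
  assumes "\<forall>x. x \<notin> T \<longrightarrow> G x = 0"
  shows "integral UNIV G = integral T G"
proof -
  have "(\<lambda>x. if x \<in> T then G x else 0) = G" using assms by auto
  thus ?thesis using integral_restrict_UNIV[of T G] by simp
qed

lemma cont_bdd_integrable:
  fixes F :: "vec3 \<Rightarrow> 'a::euclidean_space"
  assumes "continuous_on UNIV F" "bounded S" "\<forall>x. x \<notin> S \<longrightarrow> F x = 0"
  shows "F integrable_on UNIV"
proof -
  obtain a b where ab: "S \<subseteq> cbox a b" using bounded_subset_cbox_symmetric[OF assms(2)] by blast
  have "F integrable_on cbox a b"
    using integrable_continuous continuous_on_subset[OF assms(1)] by blast
  hence "(\<lambda>x. if x \<in> cbox a b then F x else 0) integrable_on UNIV"
    using integrable_restrict_UNIV by blast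
  moreover have "(\<lambda>x. if x \<in> cbox a b then F x else 0) = F" using assms(3) ab by (intro ext) auto
  ultimately show ?thesis by simp
qed

lemma transl_integral:
  fixes F :: "vec3 \<Rightarrow> real"
  assumes "bounded S" "\<forall>x. x \<notin> S \<longrightarrow> F x = 0"
  shows "integral UNIV (\<lambda>x. F (x + c)) = integral UNIV F"
proof -
  obtain a b where ab: "S \<subseteq> cbox a b" using bounded_subset_cbox_symmetric[OF assms(1)] by blast
  have z1: "\<forall>x. x \<notin> cbox a b \<longrightarrow> F x = 0" using assms(2) ab by auto
  have z2: "\<forall>x. x \<notin> cbox (a - c) (b - c) \<longrightarrow> F (x + c) = 0"
  proof (intro allI impI)
    fix x assume "x \<notin> cbox (a - c) (b - c)"
    hence "x + c \<notin> cbox a b"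
      using cbox_translation[of c "a - c" "b - c"] by (auto simp: image_iff algebra_simps)
    thus "F (x + c) = 0" using z1 by auto
  qed
  have "integral UNIV (\<lambda>x. F (x + c)) = integral (cbox (a - c) (b - c)) (\<lambda>x. F (x + c))"
    using int_restrict_eq[OF z2] .
  also have "\<dots> = integral (cbox (a - c) (b - c)) (F \<circ> ((+) c))"
    by (simp add: o_def add.commute)
  also have "\<dots> = integral (cbox a b) F"
    using integral_shift_cbox_plus[where f=F and c=c and a="a - c" and b="b - c"] by simp
  also have "\<dots> = integral UNIV F" using int_restrict_eq[OF z1] by simp
  finally show ?thesis .
qed





definition ee :: "3 \<Rightarrow> vec3" where "ee k = axis k 1"
lemma norm_ee[simp]: "norm (ee k) = 1" by (simp add: ee_def)

locale tf =
  fixes u :: "vec3 \<Rightarrow> vec3" and K :: "vec3 set"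
  assumes sm: "smooth u" and cK: "compact K" and supp: "\<forall>x. x \<notin> K \<longrightarrow> u x = 0"
begin

definition "K1 = {x + y | x y. x \<in> K \<and> y \<in> cball 0 1}"
definition "K2 = {x + y | x y. x \<in> K \<and> y \<in> cball 0 2}"
definition q :: "real \<Rightarrow> 3 \<Rightarrow> 3 \<Rightarrow> vec3 \<Rightarrow> real" where
  "q h k i x = (u (x + h *\<^sub>R ee k) $ i - u x $ i) / h"

lemma cK1: "compact K1" unfolding K1_def by (intro compact_sums cK compact_cball)
lemma cK2: "compact K2" unfolding K2_def by (intro compact_sums cK compact_cball)

lemma ucont: "continuous_on UNIV u" using smooth_D[OF sm] by blast
lemma udiff: "\<forall>y. u differentiable (at y)" using smooth_D[OF sm] by blast
lemma pcont: "continuous_on UNIV (pdiff u k)" using smooth_D[OF sm] smooth_D by blast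

lemma bound: obtains B where "B \<ge> 0" "\<And>k y. y \<in> K2 \<Longrightarrow> norm (pdiff u k y) \<le> B"
proof -
  have "compact (\<Union>k\<in>UNIV. pdiff u k ` K2)"
    by (intro compact_UN finite compact_continuous_image continuous_on_subset[OF pcont] cK2) auto
  then obtain B where "\<forall>z\<in>(\<Union>k\<in>UNIV. pdiff u k ` K2). norm z \<le> B"
    using compact_imp_bounded bounded_iff by metis
  hence "\<And>k y. y \<in> K2 \<Longrightarrow> norm (pdiff u k y) \<le> B" by blast
  moreover have "\<And>k y. y \<in> K2 \<Longrightarrow> norm (pdiff u k y) \<le> max B 0" using calculation by (meson max.coboundedI1 order_trans)
  ultimately show ?thesis using that[of "max B 0"] by auto
qed

lemma K1_K2: assumes "x \<in> K1" "\<bar>t\<bar> \<le> 1" shows "x + t *\<^sub>R ee k \<in> K2"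
proof -
  obtain a b where ab: "x = a + b" "a \<in> K" "norm b \<le> 1" using assms(1) unfolding K1_def by auto
  have "norm (b + t *\<^sub>R ee k) \<le> 2"
    using norm_triangle_ineq[of b "t *\<^sub>R ee k"] ab(3) assms(2) by simp
  hence "b + t *\<^sub>R ee k \<in> cball 0 2" by simp
  moreover have "x + t *\<^sub>R ee k = a + (b + t *\<^sub>R ee k)" using ab by simp
  ultimately show ?thesis unfolding K2_def using ab(2) by blast
qed

lemma K_K1: assumes "x \<in> K" shows "x \<in> K1"
proof -
  have "x = x + 0" "(0::vec3) \<in> cball 0 1" by auto
  thus ?thesis unfolding K1_def using assms by blast
qed

lemma q_zero: assumes "\<bar>h\<bar> \<le> 1" "x \<notin> K1" shows "q h k i x = 0"
proof -
  have "x \<notin> K" using K_K1 assms by blast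
  moreover have "x + h *\<^sub>R ee k \<notin> K"
  proof
    assume "x + h *\<^sub>R ee k \<in> K"
    moreover have "- h *\<^sub>R ee k \<in> cball 0 1" using assms(1) by simp
    ultimately have "(x + h *\<^sub>R ee k) + (- h *\<^sub>R ee k) \<in> K1" unfolding K1_def by blast
    thus False using assms(2) by simp
  qed
  ultimately show ?thesis using supp by (simp add: q_def)
qed

lemma line_d: "((\<lambda>t. u (x + t *\<^sub>R ee k) $ i) has_real_derivative (pdiff u k (x + t *\<^sub>R ee k) $ i)) (at t)"
  using line_rderiv[OF udiff] unfolding ee_def .

lemma q_bound: assumes B0: "B \<ge> 0" and B: "\<And>k y. y \<in> K2 \<Longrightarrow> norm (pdiff u k y) \<le> B" and h: "h \<noteq> 0" "\<bar>h\<bar> \<le> 1"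
  shows "\<bar>q h k i x\<bar> \<le> B"
proof (cases "x \<in> K1")
  case False
  thus ?thesis using q_zero[OF h(2) False] B0 by simp
next
  case True
  define f where "f t = u (x + t *\<^sub>R ee k) $ i" for t
  have d: "\<And>t. DERIV f t :> pdiff u k (x + t *\<^sub>R ee k) $ i" unfolding f_def by (rule line_d)
  have fb: "\<bar>pdiff u k (x + t *\<^sub>R ee k) $ i\<bar> \<le> B" if "\<bar>t\<bar> \<le> 1" for t
    using B[OF K1_K2[OF True that]] component_le_norm_cart order_trans by blast
  have main: "\<bar>f b - f a\<bar> \<le> B * (b - a)" if ab: "a < b" "\<bar>a\<bar> \<le> 1" "\<bar>b\<bar> \<le> 1" for a b
  proof -
    obtain z where z: "a < z" "z < b" "f b - f a = (b - a) * pdiff u k (x + z *\<^sub>R ee k) $ i"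
      using MVT2[where f=f and f'="\<lambda>t. pdiff u k (x + t *\<^sub>R ee k) $ i", OF ab(1)] d by blast
    have "\<bar>z\<bar> \<le> 1" using z ab by auto
    hence "\<bar>f b - f a\<bar> \<le> (b - a) * B" using z(3) fb[of z] ab(1)
      by (simp add: abs_mult mult_left_mono)
    thus ?thesis by (simp add: mult.commute)
  qed
  have "\<bar>f h - f 0\<bar> \<le> B * \<bar>h\<bar>"
  proof (cases "h > 0")
    case True thus ?thesis using main[of 0 h] h by auto
  next
    case False hence "h < 0" using h by auto
    thus ?thesis using main[of h 0] h by (auto simp: abs_minus_commute)
  qed
  moreover have "\<bar>q h k i x\<bar> = \<bar>f h - f 0\<bar> / \<bar>h\<bar>" by (simp add: q_def f_def abs_divide)
  moreover have "\<bar>h\<bar> > 0" using h by simp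
  ultimately show ?thesis by (simp add: pos_divide_le_eq)
qed

lemma q_cont: "continuous_on UNIV (q h k i)"
  unfolding q_def divide_inverse
  by (intro continuous_intros continuous_on_compose2[OF ucont] ) auto


definition hs :: "nat \<Rightarrow> real" where "hs n = inverse (real (Suc n))"
lemma hs_pos: "hs n > 0" "hs n \<le> 1" "hs n \<noteq> 0" "\<bar>hs n\<bar> \<le> 1" "\<bar>- hs n\<bar> \<le> 1" "- hs n \<noteq> 0"
  by (auto simp: hs_def field_simps)

lemma q_lim: "(\<lambda>n. q (hs n) k i x) \<longlonglongrightarrow> pdiff u k x $ i"
proof -
  define f where "f t = u (x + t *\<^sub>R ee k) $ i" for t
  have "(f has_real_derivative pdiff u k x $ i) (at 0)"
    using line_d[of x k i 0] unfolding f_def by simp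
  hence l: "((\<lambda>y. (f y - f 0) / (y - 0)) \<longlongrightarrow> pdiff u k x $ i) (at 0)"
    using has_field_derivative_iff by blast
  have "filterlim hs (at 0) sequentially"
    unfolding filterlim_at using LIMSEQ_inverse_real_of_nat hs_pos(3) unfolding hs_def by auto
  from filterlim_compose[OF l this] show ?thesis by (simp add: q_def f_def)
qed

definition P :: "3 \<Rightarrow> 3 \<Rightarrow> vec3 \<Rightarrow> vec3 \<Rightarrow> vec3 \<Rightarrow> real" where
  "P i j a b x = u (x + a) $ i * u (x + b) $ j"

lemma P_supp: "bounded ((\<lambda>y. - a + y) ` K)" "\<forall>x. x \<notin> (\<lambda>y. - a + y) ` K \<longrightarrow> P i j a b x = 0"
proof -
  show "bounded ((\<lambda>y. - a + y) ` K)" by (intro bounded_translation compact_imp_bounded cK)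
  show "\<forall>x. x \<notin> (\<lambda>y. - a + y) ` K \<longrightarrow> P i j a b x = 0"
  proof (intro allI impI)
    fix x assume "x \<notin> (\<lambda>y. - a + y) ` K"
    hence "x + a \<notin> K" by (metis add.commute add_diff_cancel_left' diff_add_cancel image_eqI uminus_add_conv_diff)
    thus "P i j a b x = 0" using supp by (simp add: P_def)
  qed
qed

lemma P_int: "P i j a b integrable_on UNIV"
proof (rule cont_bdd_integrable[OF _ P_supp])
  show "continuous_on UNIV (P i j a b)" unfolding P_def
    by (intro continuous_intros continuous_on_compose2[OF ucont]) auto
qed

lemma P_shift: "integral UNIV (P i j a b) = integral UNIV (P i j (a + c) (b + c))"
proof -
  have "integral UNIV (\<lambda>x. P i j a b (x + c)) = integral UNIV (P i j a b)"
    by (rule transl_integral[OF P_supp])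
  moreover have "(\<lambda>x. P i j a b (x + c)) = P i j (a + c) (b + c)"
    unfolding P_def by (simp add: add.assoc add.commute[of c])
  ultimately show ?thesis by simp
qed

lemma int_comb: "integral UNIV (\<lambda>x. (P i j a1 b1 x - P i j a2 b2 x - P i j a3 b3 x + P i j a4 b4 x) / c)
   = (integral UNIV (P i j a1 b1) - integral UNIV (P i j a2 b2) - integral UNIV (P i j a3 b3) + integral UNIV (P i j a4 b4)) / c"
proof -
  have e: "(\<lambda>x. (P i j a1 b1 x - P i j a2 b2 x - P i j a3 b3 x + P i j a4 b4 x) / c)
     = (\<lambda>x. inverse c *\<^sub>R (P i j a1 b1 x - P i j a2 b2 x - P i j a3 b3 x + P i j a4 b4 x))"
    by (simp add: divide_inverse mult.commute)
  show ?thesis unfolding e integral_cmul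
    by (simp add: Henstock_Kurzweil_Integration.integral_add Henstock_Kurzweil_Integration.integral_diff
          integrable_add integrable_diff P_int divide_inverse mult.commute)
qed

lemma q_prod1: assumes "h \<noteq> 0"
  shows "q h j i x * q h i j x = (P i j (h *\<^sub>R ee j) (h *\<^sub>R ee i) x - P i j (h *\<^sub>R ee j) 0 x - P i j 0 (h *\<^sub>R ee i) x + P i j 0 0 x) / h\<^sup>2"
  using assms unfolding q_def P_def by (simp add: power2_eq_square field_simps)

lemma q_prod2: assumes "h \<noteq> 0"
  shows "q (-h) i i x * q (-h) j j x = (P i j ((-h) *\<^sub>R ee i) ((-h) *\<^sub>R ee j) x - P i j ((-h) *\<^sub>R ee i) 0 x - P i j 0 ((-h) *\<^sub>R ee j) x + P i j 0 0 x) / h\<^sup>2"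
  using assms unfolding q_def P_def by (simp add: power2_eq_square field_simps)

lemma q_ident: assumes "h \<noteq> 0"
  shows "integral UNIV (\<lambda>x. q h j i x * q h i j x) = integral UNIV (\<lambda>x. q (-h) i i x * q (-h) j j x)"
proof -
  have s1: "integral UNIV (P i j (h *\<^sub>R ee j) (h *\<^sub>R ee i)) = integral UNIV (P i j ((-h) *\<^sub>R ee i) ((-h) *\<^sub>R ee j))"
    using P_shift[of i j "h *\<^sub>R ee j" "h *\<^sub>R ee i" "(-h) *\<^sub>R ee i + (-h) *\<^sub>R ee j"] by (simp add: algebra_simps)
  have s2: "integral UNIV (P i j (h *\<^sub>R ee j) 0) = integral UNIV (P i j 0 ((-h) *\<^sub>R ee j))"
    using P_shift[of i j "h *\<^sub>R ee j" 0 "(-h) *\<^sub>R ee j"] by simp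
  have s3: "integral UNIV (P i j 0 (h *\<^sub>R ee i)) = integral UNIV (P i j ((-h) *\<^sub>R ee i) 0)"
    using P_shift[of i j 0 "h *\<^sub>R ee i" "(-h) *\<^sub>R ee i"] by simp
  show ?thesis
    unfolding q_prod1[OF assms] q_prod2[OF assms] int_comb s1 s2 s3 by simp
qed

lemma qq_int: assumes "\<bar>h\<bar> \<le> 1" shows "(\<lambda>x. q h a b x * q h c d x) integrable_on UNIV"
proof (rule cont_bdd_integrable)
  show "continuous_on UNIV (\<lambda>x. q h a b x * q h c d x)" by (intro continuous_intros q_cont)
  show "bounded K1" by (intro compact_imp_bounded cK1)
  show "\<forall>x. x \<notin> K1 \<longrightarrow> q h a b x * q h c d x = 0" using q_zero[OF assms] by simp
qed

lemma sum_nonneg_h: assumes "h \<noteq> 0" "\<bar>h\<bar> \<le> 1"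
  shows "0 \<le> (\<Sum>i\<in>UNIV. \<Sum>j\<in>UNIV. integral UNIV (\<lambda>x. q h j i x * q h i j x))"
proof -
  have h': "\<bar>-h\<bar> \<le> 1" using assms by simp
  have "(\<Sum>i\<in>UNIV. \<Sum>j\<in>UNIV. integral UNIV (\<lambda>x. q h j i x * q h i j x))
      = (\<Sum>i\<in>UNIV. \<Sum>j\<in>UNIV. integral UNIV (\<lambda>x. q (-h) i i x * q (-h) j j x))"
    using q_ident[OF assms(1)] by simp
  also have "\<dots> = (\<Sum>i\<in>UNIV. integral UNIV (\<lambda>x. \<Sum>j\<in>UNIV. q (-h) i i x * q (-h) j j x))"
    by (intro sum.cong refl Henstock_Kurzweil_Integration.integral_sum[symmetric] qq_int[OF h']) auto
  also have "\<dots> = integral UNIV (\<lambda>x. \<Sum>i\<in>UNIV. \<Sum>j\<in>UNIV. q (-h) i i x * q (-h) j j x)"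
    by (intro Henstock_Kurzweil_Integration.integral_sum[symmetric] integrable_sum qq_int[OF h']) auto
  also have "\<dots> = integral UNIV (\<lambda>x. (\<Sum>i\<in>UNIV. q (-h) i i x)\<^sup>2)"
    by (simp add: power2_eq_square sum_product)
  also have "\<dots> \<ge> 0"
  proof (rule integral_nonneg)
    show "(\<lambda>x. (\<Sum>i\<in>UNIV. q (-h) i i x)\<^sup>2) integrable_on UNIV"
      unfolding power2_eq_square sum_product by (intro integrable_sum qq_int[OF h']) auto
  qed simp
  finally show ?thesis .
qed

lemma qq_lim: "(\<lambda>n. integral UNIV (\<lambda>x. q (hs n) j i x * q (hs n) i j x))
   \<longlonglongrightarrow> integral UNIV (\<lambda>x. pdiff u j x $ i * pdiff u i x $ j)"
proof -
  obtain B where B0: "B \<ge> 0" and B: "\<And>k y. y \<in> K2 \<Longrightarrow> norm (pdiff u k y) \<le> B" using bound by blast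
  define g where "g x = (if x \<in> K1 then B * B else 0)" for x
  have gi: "g integrable_on UNIV"
    unfolding g_def integrable_restrict_UNIV
    by (rule integrable_on_const[OF lmeasurable_compact[OF cK1]])
  show ?thesis
  proof (rule dominated_convergence(2)[OF _ gi])
    show "(\<lambda>x. q (hs n) j i x * q (hs n) i j x) integrable_on UNIV" for n by (rule qq_int[OF hs_pos(4)])
    show "norm (q (hs n) j i x * q (hs n) i j x) \<le> g x" for n x
    proof (cases "x \<in> K1")
      case True
      have "\<bar>q (hs n) j i x\<bar> * \<bar>q (hs n) i j x\<bar> \<le> B * B"
        by (intro mult_mono q_bound[OF B0 B] hs_pos) (auto simp: B0)
      thus ?thesis using True by (simp add: g_def abs_mult)
    next
      case False thus ?thesis using q_zero[OF hs_pos(4)] by (simp add: g_def)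
    qed
    show "(\<lambda>n. q (hs n) j i x * q (hs n) i j x) \<longlonglongrightarrow> pdiff u j x $ i * pdiff u i x $ j" for x
      by (intro tendsto_mult q_lim)
  qed
qed

lemma korn_sum: "0 \<le> (\<Sum>i\<in>UNIV. \<Sum>j\<in>UNIV. integral UNIV (\<lambda>x. pdiff u j x $ i * pdiff u i x $ j))"
proof (rule LIMSEQ_le_const)
  show "(\<lambda>n. \<Sum>i\<in>UNIV. \<Sum>j\<in>UNIV. integral UNIV (\<lambda>x. q (hs n) j i x * q (hs n) i j x))
     \<longlonglongrightarrow> (\<Sum>i\<in>UNIV. \<Sum>j\<in>UNIV. integral UNIV (\<lambda>x. pdiff u j x $ i * pdiff u i x $ j))"
    by (intro tendsto_sum qq_lim)
  show "\<exists>N. \<forall>n\<ge>N. 0 \<le> (\<Sum>i\<in>UNIV. \<Sum>j\<in>UNIV. integral UNIV (\<lambda>x. q (hs n) j i x * q (hs n) i j x))"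
    using sum_nonneg_h[OF hs_pos(3) hs_pos(4)] by blast
qed

end





context tf
begin

lemma grad_zero: assumes "x \<notin> K" shows "grad u x = 0"
proof -
  have o: "open (- K)" using compact_imp_closed[OF cK] by (simp add: open_Compl)
  have "((\<lambda>y. 0::vec3) has_derivative (\<lambda>h. 0)) (at x)" by simp
  hence "(u has_derivative (\<lambda>h. 0)) (at x)"
    by (rule has_derivative_transform_within_open[OF _ o]) (use assms supp in auto)
  hence "frechet_derivative u (at x) = (\<lambda>h. 0)" using frechet_derivative_at by metis
  thus ?thesis by (simp add: grad_def pdiff_def vec_eq_iff)
qed

lemma pdiff_zero: assumes "x \<notin> K" shows "pdiff u j x $ i = 0"
proof -
  have "grad u x $ i $ j = 0" using grad_zero[OF assms] by simp
  thus ?thesis by (simp add: grad_def)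
qed

lemma grad_cont: "continuous_on UNIV (grad u)"
  unfolding grad_def by (intro continuous_intros pcont)

lemma gint: fixes F :: "vec3 \<Rightarrow> 'a::euclidean_space" assumes "continuous_on UNIV F" "\<forall>x. x \<notin> K \<longrightarrow> F x = 0" shows "F integrable_on UNIV"
  using cont_bdd_integrable[OF assms(1) compact_imp_bounded[OF cK] assms(2)] .

lemma korn_grad:
  "(\<lambda>x. (norm (grad u x))\<^sup>2) integrable_on UNIV"
  "(\<lambda>x. (norm (symm (grad u x)))\<^sup>2) integrable_on UNIV"
  "integral UNIV (\<lambda>x. (norm (grad u x))\<^sup>2) \<le> 2 * integral UNIV (\<lambda>x. (norm (symm (grad u x)))\<^sup>2)"
proof -
  have gc: "continuous_on UNIV (grad u)" by (rule grad_cont)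
  have sc: "continuous_on UNIV (\<lambda>x. symm (grad u x))"
    using linear_continuous_on[OF symm_lin[unfolded linear_conv_bounded_linear]]
    by (intro continuous_on_compose2[OF _ gc]) auto
  show i1: "(\<lambda>x. (norm (grad u x))\<^sup>2) integrable_on UNIV"
    by (rule gint) (auto intro!: continuous_intros gc simp: grad_zero)
  show i2: "(\<lambda>x. (norm (symm (grad u x)))\<^sup>2) integrable_on UNIV"
  proof (rule gint)
    show "continuous_on UNIV (\<lambda>x. (norm (symm (grad u x)))\<^sup>2)" by (intro continuous_intros sc)
    show "\<forall>x. x \<notin> K \<longrightarrow> (norm (symm (grad u x)))\<^sup>2 = 0"
      by (simp add: grad_zero symm_def vec_eq_iff transpose_def)
  qed
  have i3: "(\<lambda>x. pdiff u j x $ i * pdiff u i x $ j) integrable_on UNIV" for i j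
  proof (rule gint)
    show "continuous_on UNIV (\<lambda>x. pdiff u j x $ i * pdiff u i x $ j)" by (intro continuous_intros pcont)
    show "\<forall>x. x \<notin> K \<longrightarrow> pdiff u j x $ i * pdiff u i x $ j = 0" by (simp add: pdiff_zero)
  qed
  have "2 * integral UNIV (\<lambda>x. (norm (symm (grad u x)))\<^sup>2) = integral UNIV (\<lambda>x. 2 * (norm (symm (grad u x)))\<^sup>2)"
    by (rule integral_mult[OF i2])
  also have "\<dots> = integral UNIV (\<lambda>x. (norm (grad u x))\<^sup>2 + (\<Sum>i\<in>UNIV. \<Sum>j\<in>UNIV. pdiff u j x $ i * pdiff u i x $ j))"
  proof (rule arg_cong[where f="integral UNIV"], rule ext)
    fix x
    have g: "grad u x $ i $ j = pdiff u j x $ i" for i j by (simp add: grad_def)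
    show "2 * (norm (symm (grad u x)))\<^sup>2 = (norm (grad u x))\<^sup>2 + (\<Sum>i\<in>UNIV. \<Sum>j\<in>UNIV. pdiff u j x $ i * pdiff u i x $ j)"
      using two_symm_sq[of "grad u x"] by (simp only: g)
  qed
  also have "\<dots> = integral UNIV (\<lambda>x. (norm (grad u x))\<^sup>2) + (\<Sum>i\<in>UNIV. \<Sum>j\<in>UNIV. integral UNIV (\<lambda>x. pdiff u j x $ i * pdiff u i x $ j))"
  proof -
    have si: "(\<lambda>x. \<Sum>i\<in>UNIV. \<Sum>j\<in>UNIV. pdiff u j x $ i * pdiff u i x $ j) integrable_on UNIV"
      by (intro integrable_sum i3) auto
    have "integral UNIV (\<lambda>x. \<Sum>i\<in>UNIV. \<Sum>j\<in>UNIV. pdiff u j x $ i * pdiff u i x $ j)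
        = (\<Sum>i\<in>UNIV. integral UNIV (\<lambda>x. \<Sum>j\<in>UNIV. pdiff u j x $ i * pdiff u i x $ j))"
      by (intro Henstock_Kurzweil_Integration.integral_sum integrable_sum i3) auto
    also have "\<dots> = (\<Sum>i\<in>UNIV. \<Sum>j\<in>UNIV. integral UNIV (\<lambda>x. pdiff u j x $ i * pdiff u i x $ j))"
      by (intro sum.cong refl Henstock_Kurzweil_Integration.integral_sum i3) auto
    finally show ?thesis using Henstock_Kurzweil_Integration.integral_add[OF i1 si] by simp
  qed
  finally show "integral UNIV (\<lambda>x. (norm (grad u x))\<^sup>2) \<le> 2 * integral UNIV (\<lambda>x. (norm (symm (grad u x)))\<^sup>2)"
    using korn_sum by linarith
qed
end

lemma open_leb: "open S \<Longrightarrow> S \<in> sets lebesgue"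
  by (metis borel_open sets_completionI_sets sets_lborel)

lemma test_korn:
  assumes "test_field \<Omega> u" "open \<Omega>"
  shows "(\<lambda>x. (norm (grad u x))\<^sup>2) integrable_on \<Omega>"
    "(\<lambda>x. (norm (symm (grad u x)))\<^sup>2) integrable_on \<Omega>"
    "grad u measurable_on \<Omega>"
    "integral \<Omega> (\<lambda>x. (norm (grad u x))\<^sup>2) \<le> 2 * integral \<Omega> (\<lambda>x. (norm (symm (grad u x)))\<^sup>2)"
proof -
  define K where "K = closure {x. u x \<noteq> 0}"
  have KO: "K \<subseteq> \<Omega>" and cK: "compact K" using assms(1) unfolding test_field_def K_def by simp_all
  have supp: "\<forall>x. x \<notin> K \<longrightarrow> u x = 0"
  proof (intro allI impI)
    fix x assume "x \<notin> K"
    hence "x \<notin> {x. u x \<noteq> 0}" unfolding K_def by (meson closure_subset contra_subsetD)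
    thus "u x = 0" by simp
  qed
  have smu: "smooth u" using assms(1) unfolding test_field_def by (rule conjunct1)
  interpret tf u K using smu cK supp by (rule tf.intro)
  have gz: "\<forall>x. x \<notin> \<Omega> \<longrightarrow> grad u x = 0" using KO grad_zero by blast
  have z1: "\<forall>x. x \<notin> \<Omega> \<longrightarrow> (norm (grad u x))\<^sup>2 = 0" using gz by simp
  have z2: "\<forall>x. x \<notin> \<Omega> \<longrightarrow> (norm (symm (grad u x)))\<^sup>2 = 0" using gz by (simp add: symm_def vec_eq_iff transpose_def)
  have e1: "(\<lambda>x. if x \<in> \<Omega> then (norm (grad u x))\<^sup>2 else 0) = (\<lambda>x. (norm (grad u x))\<^sup>2)" using z1 by auto
  have e2: "(\<lambda>x. if x \<in> \<Omega> then (norm (symm (grad u x)))\<^sup>2 else 0) = (\<lambda>x. (norm (symm (grad u x)))\<^sup>2)" using z2 by auto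
  show "(\<lambda>x. (norm (grad u x))\<^sup>2) integrable_on \<Omega>"
    using korn_grad(1) integrable_restrict_UNIV[of \<Omega> "\<lambda>x. (norm (grad u x))\<^sup>2"] e1 by simp
  show "(\<lambda>x. (norm (symm (grad u x)))\<^sup>2) integrable_on \<Omega>"
    using korn_grad(2) integrable_restrict_UNIV[of \<Omega> "\<lambda>x. (norm (symm (grad u x)))\<^sup>2"] e2 by simp
  have "(\<lambda>x. if x \<in> \<Omega> then grad u x else 0) = grad u" using gz by auto
  thus "grad u measurable_on \<Omega>"
    using measurable_on_UNIV[of \<Omega> "grad u"] continuous_imp_measurable_on[OF grad_cont] by simp
  show "integral \<Omega> (\<lambda>x. (norm (grad u x))\<^sup>2) \<le> 2 * integral \<Omega> (\<lambda>x. (norm (symm (grad u x)))\<^sup>2)"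
    using korn_grad(3) int_restrict_eq[OF z1] int_restrict_eq[OF z2] by simp
qed




lemma meas_int:
  fixes f :: "vec3 \<Rightarrow> real"
  assumes "f measurable_on S" "g integrable_on S" "\<And>x. x \<in> S \<Longrightarrow> \<bar>f x\<bar> \<le> g x" "open S"
  shows "f integrable_on S"
  using measurable_bounded_by_integrable_imp_integrable_real[of f S g] assms
    measurable_on_iff_borel_measurable[OF open_leb[OF assms(4)]] open_leb[OF assms(4)] by blast

lemma symm0: "symm 0 = 0" by (simp add: symm_def vec_eq_iff transpose_def)

lemma symm_cont: "continuous_on S g \<Longrightarrow> continuous_on S (\<lambda>x. symm (g x))"
  using linear_continuous_on[OF symm_lin[unfolded linear_conv_bounded_linear]]
  by (rule continuous_on_compose2) auto

lemma meas_sq: fixes f :: "vec3 \<Rightarrow> 'a::euclidean_space"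
  shows "f measurable_on S \<Longrightarrow> (\<lambda>x. (norm (f x))\<^sup>2) measurable_on S"
  using measurable_on_compose_continuous_0[of f S "\<lambda>X. (norm X)\<^sup>2"]
  by (auto simp: o_def intro: continuous_intros)

lemma meas_symm_sq: "(f :: vec3 \<Rightarrow> mat3) measurable_on S \<Longrightarrow> (\<lambda>x. (norm (symm (f x)))\<^sup>2) measurable_on S"
proof -
  assume f: "f measurable_on S"
  have "continuous_on UNIV (\<lambda>X. (norm (symm X))\<^sup>2)"
    by (intro continuous_intros symm_cont continuous_on_id)
  thus ?thesis using measurable_on_compose_continuous_0[of f S "\<lambda>X. (norm (symm X))\<^sup>2"] f
    by (simp add: o_def symm0)
qed

lemma sq_tri: fixes a b :: "'a::real_normed_vector"
  shows "(norm (a + b))\<^sup>2 \<le> 2 * (norm a)\<^sup>2 + 2 * (norm b)\<^sup>2"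
proof -
  have "norm (a + b) \<le> norm a + norm b" by (rule norm_triangle_ineq)
  hence "(norm (a + b))\<^sup>2 \<le> (norm a + norm b)\<^sup>2" by (simp add: power_mono)
  also have "\<dots> \<le> 2 * (norm a)\<^sup>2 + 2 * (norm b)\<^sup>2" using sum_squares_bound[of "norm a" "norm b"]
    by (simp add: power2_eq_square algebra_simps)
  finally show ?thesis .
qed

lemma korn_H01:
  assumes H: "H01 \<Omega> \<phi> D" and o: "open \<Omega>"
  shows "integral \<Omega> (\<lambda>x. (norm (D x))\<^sup>2) \<le> 8 * integral \<Omega> (\<lambda>x. (norm (symm (D x)))\<^sup>2)"
proof -
  obtain us where tf: "\<And>n. test_field \<Omega> (us n)" and conv: "L2_conv \<Omega> (\<lambda>n. grad (us n)) D"
    using H unfolding H01_def by blast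
  have mD: "D measurable_on \<Omega>" and iD: "(\<lambda>x. (norm (D x))\<^sup>2) integrable_on \<Omega>"
    using H unfolding H01_def L2_def by auto
  define e where "e n = integral \<Omega> (\<lambda>x. (norm (grad (us n) x - D x))\<^sup>2)" for n
  define S where "S = integral \<Omega> (\<lambda>x. (norm (symm (D x)))\<^sup>2)"
  define T where "T = integral \<Omega> (\<lambda>x. (norm (D x))\<^sup>2)"
  have elim: "e \<longlonglongrightarrow> 0" using conv unfolding L2_conv_def e_def by simp
  have iSD: "(\<lambda>x. (norm (symm (D x)))\<^sup>2) integrable_on \<Omega>"
    by (rule meas_int[OF meas_symm_sq[OF mD] iD _ o]) (simp add: norm_symm_le power_mono)
  have bnd: "T \<le> 8 * S + 10 * e n" for n
  proof -
    let ?a = "grad (us n)"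
    have iA: "(\<lambda>x. (norm (?a x))\<^sup>2) integrable_on \<Omega>" and iSA: "(\<lambda>x. (norm (symm (?a x)))\<^sup>2) integrable_on \<Omega>"
      and mA: "?a measurable_on \<Omega>"
      and kA: "integral \<Omega> (\<lambda>x. (norm (?a x))\<^sup>2) \<le> 2 * integral \<Omega> (\<lambda>x. (norm (symm (?a x)))\<^sup>2)"
      using test_korn[OF tf o] by auto
    have i2: "(\<lambda>x. 2 * (norm (?a x))\<^sup>2 + 2 * (norm (D x))\<^sup>2) integrable_on \<Omega>"
      by (intro integrable_add integrable_on_mult_right iA iD)
    have iE: "(\<lambda>x. (norm (?a x - D x))\<^sup>2) integrable_on \<Omega>"
    proof (rule meas_int[OF meas_sq[OF measurable_on_diff[OF mA mD]] i2 _ o])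
      fix x show "\<bar>(norm (?a x - D x))\<^sup>2\<bar> \<le> 2 * (norm (?a x))\<^sup>2 + 2 * (norm (D x))\<^sup>2"
        using sq_tri[of "?a x" "- D x"] by simp
    qed
    have iB1: "(\<lambda>x. 2 * (norm (?a x))\<^sup>2 + 2 * (norm (?a x - D x))\<^sup>2) integrable_on \<Omega>"
      by (intro integrable_add integrable_on_mult_right iA iE)
    have iB2: "(\<lambda>x. 2 * (norm (symm (D x)))\<^sup>2 + 2 * (norm (?a x - D x))\<^sup>2) integrable_on \<Omega>"
      by (intro integrable_add integrable_on_mult_right iSD iE)
    have "T \<le> integral \<Omega> (\<lambda>x. 2 * (norm (?a x))\<^sup>2 + 2 * (norm (?a x - D x))\<^sup>2)"
      unfolding T_def
    proof (rule integral_le[OF iD iB1])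
      fix x have "D x = ?a x + - (?a x - D x)" by simp
      hence "(norm (D x))\<^sup>2 = (norm (?a x + - (?a x - D x)))\<^sup>2" by metis
      also have "\<dots> \<le> 2 * (norm (?a x))\<^sup>2 + 2 * (norm (?a x - D x))\<^sup>2" using sq_tri[of "?a x" "- (?a x - D x)"] by (simp only: norm_minus_cancel)
      finally show "(norm (D x))\<^sup>2 \<le> 2 * (norm (?a x))\<^sup>2 + 2 * (norm (?a x - D x))\<^sup>2" .
    qed
    also have "\<dots> = 2 * integral \<Omega> (\<lambda>x. (norm (?a x))\<^sup>2) + 2 * e n"
      unfolding e_def
      by (simp add: Henstock_Kurzweil_Integration.integral_add integrable_on_mult_right iA iE)
    finally have t1: "T \<le> 2 * integral \<Omega> (\<lambda>x. (norm (?a x))\<^sup>2) + 2 * e n" .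
    have "integral \<Omega> (\<lambda>x. (norm (symm (?a x)))\<^sup>2) \<le> integral \<Omega> (\<lambda>x. 2 * (norm (symm (D x)))\<^sup>2 + 2 * (norm (?a x - D x))\<^sup>2)"
    proof (rule integral_le[OF iSA iB2])
      fix x have "symm (?a x) = symm (D x) + symm (?a x - D x)" by (simp add: symm_diff)
      hence "(norm (symm (?a x)))\<^sup>2 \<le> 2 * (norm (symm (D x)))\<^sup>2 + 2 * (norm (symm (?a x - D x)))\<^sup>2"
        using sq_tri[of "symm (D x)" "symm (?a x - D x)"] by simp
      also have "\<dots> \<le> 2 * (norm (symm (D x)))\<^sup>2 + 2 * (norm (?a x - D x))\<^sup>2"
        using norm_symm_le[of "?a x - D x"] by (simp add: power_mono)
      finally show "(norm (symm (?a x)))\<^sup>2 \<le> 2 * (norm (symm (D x)))\<^sup>2 + 2 * (norm (?a x - D x))\<^sup>2" .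
    qed
    also have "\<dots> = 2 * S + 2 * e n"
      unfolding e_def S_def
      by (simp add: Henstock_Kurzweil_Integration.integral_add integrable_on_mult_right iSD iE)
    finally have t2: "integral \<Omega> (\<lambda>x. (norm (symm (?a x)))\<^sup>2) \<le> 2 * S + 2 * e n" .
    show ?thesis using t1 t2 kA by linarith
  qed
  have "(\<lambda>n. 8 * S + 10 * e n) \<longlonglongrightarrow> 8 * S + 10 * 0"
    by (intro tendsto_intros elim)
  hence "T \<le> 8 * S" using bnd by (auto intro: LIMSEQ_le_const)
  thus ?thesis unfolding T_def S_def .
qed




lemma lin_cont_comp: "linear (f :: mat3 \<Rightarrow> mat3) \<Longrightarrow> continuous_on S g \<Longrightarrow> continuous_on S (\<lambda>x. f (g x))"
  by (rule continuous_on_compose2[OF linear_continuous_on[OF iffD1[OF linear_conv_bounded_linear]]]) auto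

lemma sq_le2: "(norm (symm (X - Y)))\<^sup>2 \<le> 2 * (norm X)\<^sup>2 + 2 * (norm Y)\<^sup>2"
proof -
  have "(norm (symm (X - Y)))\<^sup>2 \<le> (norm (X + - Y))\<^sup>2" using norm_symm_le[of "X - Y"] by (simp add: power_mono)
  also have "\<dots> \<le> 2 * (norm X)\<^sup>2 + 2 * (norm Y)\<^sup>2" using sq_tri[of X "- Y"] by simp
  finally show ?thesis .
qed

lemma sq_le2': "(norm (skew (X - Y)))\<^sup>2 \<le> 2 * (norm X)\<^sup>2 + 2 * (norm Y)\<^sup>2"
proof -
  have "(norm (skew (X - Y)))\<^sup>2 \<le> (norm (X + - Y))\<^sup>2" using norm_skew_le[of "X - Y"] by (simp add: power_mono)
  also have "\<dots> \<le> 2 * (norm X)\<^sup>2 + 2 * (norm Y)\<^sup>2" using sq_tri[of X "- Y"] by simp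
  finally show ?thesis .
qed

lemma arith17: "(a::real) \<le> 16*e + 16*p \<Longrightarrow> 0\<le>f \<Longrightarrow> 0\<le>p \<Longrightarrow> 0\<le>cc \<Longrightarrow> 0 \<le> e \<Longrightarrow> f + a + p + cc \<le> 17*(f+p+e+cc)"
  by argo

theorem mainTheorem3:
  fixes \<Omega> :: "(real^3) set"
    and Ce Cc Cmicro Laniso :: "3 \<Rightarrow> 3 \<Rightarrow> 3 \<Rightarrow> 3 \<Rightarrow> real"
    and \<rho> J Lc \<mu> :: real
  assumes dom: "open \<Omega>" "connected \<Omega>" "bounded \<Omega>" "\<Omega> \<noteq> {}"
    and Ce_sym: "\<forall>i j r s. Ce i j r s = Ce r s i j \<and> Ce i j r s = Ce j i r s"
    and Cm_sym: "\<forall>i j r s. Cmicro i j r s = Cmicro r s i j \<and> Cmicro i j r s = Cmicro j i r s"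
    and Cc_sym: "\<forall>i j r s. Cc i j r s = - Cc j i r s \<and> Cc i j r s = Cc r s i j"
    and L_sym: "\<forall>i j r s. Laniso i j r s = Laniso r s i j"
    and Ce_pd: "pos_def_on Sym3 Ce"
    and L_pd: "pos_def_on UNIV Laniso"
    and Cm_psd: "psd_bounded_on Sym3 Cmicro"
    and Cc_psd: "psd_bounded_on so3 Cc"
    and pos: "\<rho> > 0" "J > 0" "Lc > 0" "\<mu> > 0"
  shows "\<exists>c>0. \<forall>\<phi> D\<phi> \<Phi> Curl\<Phi>. H01 \<Omega> \<phi> D\<phi> \<longrightarrow> H0Curl \<Omega> \<Phi> Curl\<Phi> \<longrightarrow>
           W1 \<Omega> \<rho> J \<mu> Lc Ce Cc Cmicro Laniso \<phi> D\<phi> \<Phi> Curl\<Phi> \<phi> D\<phi> \<Phi> Curl\<Phi>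
             \<ge> c * ( integral \<Omega> (\<lambda>x. (norm (\<phi> x))\<^sup>2) + integral \<Omega> (\<lambda>x. (norm (D\<phi> x))\<^sup>2)
                    + integral \<Omega> (\<lambda>x. (norm (\<Phi> x))\<^sup>2) + integral \<Omega> (\<lambda>x. (norm (Curl\<Phi> x))\<^sup>2))"
proof -
  obtain ce where ce: "ce > 0" "\<And>X. X \<in> Sym3 \<Longrightarrow> ce * (norm X)\<^sup>2 \<le> tact Ce X \<bullet> X"
    using Ce_pd unfolding pos_def_on_def by blast
  obtain cL where cL: "cL > 0" "\<And>X. cL * (norm X)\<^sup>2 \<le> tact Laniso X \<bullet> X"
    using L_pd unfolding pos_def_on_def by blast
  have cm: "\<And>X. X \<in> Sym3 \<Longrightarrow> 0 \<le> tact Cmicro X \<bullet> X" using Cm_psd unfolding psd_bounded_on_def by blast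
  have cc: "\<And>X. X \<in> so3 \<Longrightarrow> 0 \<le> tact Cc X \<bullet> X" using Cc_psd unfolding psd_bounded_on_def by blast
  define k where "k = \<mu> * Lc\<^sup>2"
  have k: "k > 0" unfolding k_def using pos by simp
  define m where "m = min (min \<rho> J) (min ce (k * cL))"
  have m: "m > 0" "m \<le> \<rho>" "m \<le> J" "m \<le> ce" "m \<le> k * cL" unfolding m_def using pos ce cL k by auto
  define c where "c = m / 17"
  have c: "c > 0" "17 * c = m" unfolding c_def using m by auto
  define SS where "SS C = (\<Sum>i\<in>UNIV. \<Sum>j\<in>UNIV. \<Sum>k\<in>UNIV. \<Sum>l\<in>UNIV. \<bar>(C::tensor4) i j k l\<bar>)" for C
  have SS0: "SS C \<ge> 0" for C unfolding SS_def by (intro sum_nonneg) auto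
  have tb: "\<bar>tact C X \<bullet> X\<bar> \<le> 2 * SS C * (norm X)\<^sup>2" for C X
    using tact_bound[of C X X] unfolding SS_def by simp
  show ?thesis
  proof (intro exI[of _ c] conjI allI impI c(1))
    fix \<phi> D \<Phi> CP
    assume H: "H01 \<Omega> \<phi> D" and HC: "H0Curl \<Omega> \<Phi> CP"
    have m\<phi>: "\<phi> measurable_on \<Omega>" and i\<phi>: "(\<lambda>x. (norm (\<phi> x))\<^sup>2) integrable_on \<Omega>"
      and mD: "D measurable_on \<Omega>" and iD: "(\<lambda>x. (norm (D x))\<^sup>2) integrable_on \<Omega>"
      using H unfolding H01_def L2_def by auto
    have m\<Phi>: "\<Phi> measurable_on \<Omega>" and i\<Phi>: "(\<lambda>x. (norm (\<Phi> x))\<^sup>2) integrable_on \<Omega>"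
      and mC: "CP measurable_on \<Omega>" and iC: "(\<lambda>x. (norm (CP x))\<^sup>2) integrable_on \<Omega>"
      using HC unfolding H0Curl_def L2_def by auto
    define g where "g x = \<rho> * (\<phi> x \<bullet> \<phi> x) + J * (\<Phi> x \<bullet> \<Phi> x)
      + tact Ce (symm (D x - \<Phi> x)) \<bullet> symm (D x - \<Phi> x)
      + tact Cc (skew (D x - \<Phi> x)) \<bullet> skew (D x - \<Phi> x)
      + tact Cmicro (symm (\<Phi> x)) \<bullet> symm (\<Phi> x)
      + \<mu> * Lc\<^sup>2 * (tact Laniso (CP x) \<bullet> CP x)" for x
    have W: "W1 \<Omega> \<rho> J \<mu> Lc Ce Cc Cmicro Laniso \<phi> D \<Phi> CP \<phi> D \<Phi> CP = integral \<Omega> g"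
      unfolding W1_def g_def ..
    define Z where "Z x = (norm (\<phi> x))\<^sup>2 + (norm (D x))\<^sup>2 + (norm (\<Phi> x))\<^sup>2 + (norm (CP x))\<^sup>2" for x
    have iZ: "Z integrable_on \<Omega>" unfolding Z_def by (intro integrable_add i\<phi> iD i\<Phi> iC)
    define KK where "KK = \<rho> + J + 4 * SS Ce + 4 * SS Cc + 2 * SS Cmicro + 2 * k * SS Laniso"
    have iKZ: "(\<lambda>x. KK * Z x) integrable_on \<Omega>" by (intro integrable_on_mult_right iZ)
    define G where "G z = \<rho> * (fst z \<bullet> fst z) + J * (fst (snd (snd z)) \<bullet> fst (snd (snd z)))
      + tact Ce (symm (fst (snd z) - fst (snd (snd z)))) \<bullet> symm (fst (snd z) - fst (snd (snd z)))
      + tact Cc (skew (fst (snd z) - fst (snd (snd z)))) \<bullet> skew (fst (snd z) - fst (snd (snd z)))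
      + tact Cmicro (symm (fst (snd (snd z)))) \<bullet> symm (fst (snd (snd z)))
      + \<mu> * Lc\<^sup>2 * (tact Laniso (snd (snd (snd z))) \<bullet> snd (snd (snd z)))"
      for z :: "vec3 \<times> mat3 \<times> mat3 \<times> mat3"
    have Gc: "continuous_on UNIV G" unfolding G_def
      by (intro continuous_intros lin_cont_comp[OF tact_lin] lin_cont_comp[OF symm_lin] lin_cont_comp[OF skew_lin])
    have G0: "G 0 = 0"
      by (simp add: G_def linear_0[OF tact_lin] linear_0[OF symm_lin] linear_0[OF skew_lin])
    have mP: "(\<lambda>x. (\<phi> x, D x, \<Phi> x, CP x)) measurable_on \<Omega>"
      by (intro measurable_on_Pair m\<phi> mD m\<Phi> mC)
    have mg: "g measurable_on \<Omega>"
    proof -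
      have "g = (\<lambda>x. G (\<phi> x, D x, \<Phi> x, CP x))" by (rule ext) (simp add: g_def G_def)
      thus ?thesis using measurable_on_compose_continuous_0[OF mP Gc G0] by (simp add: o_def)
    qed
    have gb: "\<bar>g x\<bar> \<le> KK * Z x" for x
    proof -
      let ?E = "symm (D x - \<Phi> x)" and ?F = "skew (D x - \<Phi> x)"
      have t1: "\<bar>\<rho> * (\<phi> x \<bullet> \<phi> x)\<bar> = \<rho> * (norm (\<phi> x))\<^sup>2" using pos by (simp add: power2_norm_eq_inner)
      have t2: "\<bar>J * (\<Phi> x \<bullet> \<Phi> x)\<bar> = J * (norm (\<Phi> x))\<^sup>2" using pos by (simp add: power2_norm_eq_inner)
      have t3: "\<bar>tact Ce ?E \<bullet> ?E\<bar> \<le> 4 * SS Ce * ((norm (D x))\<^sup>2 + (norm (\<Phi> x))\<^sup>2)"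
      proof -
        have "\<bar>tact Ce ?E \<bullet> ?E\<bar> \<le> 2 * SS Ce * (norm ?E)\<^sup>2" by (rule tb)
        also have "\<dots> \<le> 2 * SS Ce * (2 * (norm (D x))\<^sup>2 + 2 * (norm (\<Phi> x))\<^sup>2)"
          by (intro mult_left_mono sq_le2) (use SS0 in auto)
        finally show ?thesis by (simp add: algebra_simps)
      qed
      have t4: "\<bar>tact Cc ?F \<bullet> ?F\<bar> \<le> 4 * SS Cc * ((norm (D x))\<^sup>2 + (norm (\<Phi> x))\<^sup>2)"
      proof -
        have "\<bar>tact Cc ?F \<bullet> ?F\<bar> \<le> 2 * SS Cc * (norm ?F)\<^sup>2" by (rule tb)
        also have "\<dots> \<le> 2 * SS Cc * (2 * (norm (D x))\<^sup>2 + 2 * (norm (\<Phi> x))\<^sup>2)"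
          by (intro mult_left_mono sq_le2') (use SS0 in auto)
        finally show ?thesis by (simp add: algebra_simps)
      qed
      have t5: "\<bar>tact Cmicro (symm (\<Phi> x)) \<bullet> symm (\<Phi> x)\<bar> \<le> 2 * SS Cmicro * (norm (\<Phi> x))\<^sup>2"
      proof -
        have "\<bar>tact Cmicro (symm (\<Phi> x)) \<bullet> symm (\<Phi> x)\<bar> \<le> 2 * SS Cmicro * (norm (symm (\<Phi> x)))\<^sup>2" by (rule tb)
        also have "\<dots> \<le> 2 * SS Cmicro * (norm (\<Phi> x))\<^sup>2"
          by (intro mult_left_mono power_mono norm_symm_le) (use SS0 in auto)
        finally show ?thesis .
      qed
      have t6: "\<bar>\<mu> * Lc\<^sup>2 * (tact Laniso (CP x) \<bullet> CP x)\<bar> \<le> k * (2 * SS Laniso * (norm (CP x))\<^sup>2)"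
        unfolding k_def[symmetric] abs_mult using k by (simp add: mult_left_mono tb)
      have "\<bar>g x\<bar> \<le> \<bar>\<rho> * (\<phi> x \<bullet> \<phi> x)\<bar> + \<bar>J * (\<Phi> x \<bullet> \<Phi> x)\<bar> + \<bar>tact Ce ?E \<bullet> ?E\<bar> + \<bar>tact Cc ?F \<bullet> ?F\<bar>
         + \<bar>tact Cmicro (symm (\<Phi> x)) \<bullet> symm (\<Phi> x)\<bar> + \<bar>\<mu> * Lc\<^sup>2 * (tact Laniso (CP x) \<bullet> CP x)\<bar>"
        unfolding g_def by linarith
      also have "\<dots> \<le> \<rho> * (norm (\<phi> x))\<^sup>2 + J * (norm (\<Phi> x))\<^sup>2
          + 4 * SS Ce * ((norm (D x))\<^sup>2 + (norm (\<Phi> x))\<^sup>2) + 4 * SS Cc * ((norm (D x))\<^sup>2 + (norm (\<Phi> x))\<^sup>2)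
          + 2 * SS Cmicro * (norm (\<Phi> x))\<^sup>2 + k * (2 * SS Laniso * (norm (CP x))\<^sup>2)"
        using t1 t2 t3 t4 t5 t6 by linarith
      also have "\<dots> \<le> KK * Z x"
      proof -
        have n: "0 \<le> (norm (\<phi> x))\<^sup>2" "0 \<le> (norm (D x))\<^sup>2" "0 \<le> (norm (\<Phi> x))\<^sup>2" "0 \<le> (norm (CP x))\<^sup>2" by auto
        have s: "0 \<le> SS Ce" "0 \<le> SS Cc" "0 \<le> SS Cmicro" "0 \<le> k * SS Laniso" using SS0 k by auto
        have z1: "(norm (\<phi> x))\<^sup>2 \<le> Z x" "(norm (\<Phi> x))\<^sup>2 \<le> Z x" "(norm (CP x))\<^sup>2 \<le> Z x"
          "(norm (D x))\<^sup>2 + (norm (\<Phi> x))\<^sup>2 \<le> Z x" using n unfolding Z_def by auto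
        have r1: "\<rho> * (norm (\<phi> x))\<^sup>2 \<le> \<rho> * Z x" using z1 pos by (simp add: mult_left_mono)
        have r2: "J * (norm (\<Phi> x))\<^sup>2 \<le> J * Z x" using z1 pos by (simp add: mult_left_mono)
        have r3: "4 * SS Ce * ((norm (D x))\<^sup>2 + (norm (\<Phi> x))\<^sup>2) \<le> 4 * SS Ce * Z x"
          using z1(4) s by (intro mult_left_mono) auto
        have r4: "4 * SS Cc * ((norm (D x))\<^sup>2 + (norm (\<Phi> x))\<^sup>2) \<le> 4 * SS Cc * Z x"
          using z1(4) s by (intro mult_left_mono) auto
        have r5: "2 * SS Cmicro * (norm (\<Phi> x))\<^sup>2 \<le> 2 * SS Cmicro * Z x"
          using z1(2) s by (intro mult_left_mono) auto
        have r6: "k * (2 * SS Laniso * (norm (CP x))\<^sup>2) \<le> 2 * k * SS Laniso * Z x"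
          using mult_left_mono[OF z1(3), of "2 * (k * SS Laniso)"] s by (simp add: algebra_simps)
        have "KK * Z x = \<rho> * Z x + J * Z x + 4 * SS Ce * Z x + 4 * SS Cc * Z x + 2 * SS Cmicro * Z x + 2 * k * SS Laniso * Z x"
          unfolding KK_def by (simp add: algebra_simps)
        thus ?thesis using r1 r2 r3 r4 r5 r6 by linarith
      qed
      finally show ?thesis .
    qed
    have ig: "g integrable_on \<Omega>" by (rule meas_int[OF mg iKZ _ dom(1)]) (use gb in auto)
    define L where "L x = (norm (\<phi> x))\<^sup>2 + (norm (\<Phi> x))\<^sup>2 + (norm (symm (D x - \<Phi> x)))\<^sup>2 + (norm (CP x))\<^sup>2" for x
    have mE: "(\<lambda>x. (norm (symm (D x - \<Phi> x)))\<^sup>2) measurable_on \<Omega>"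
      by (rule meas_symm_sq[OF measurable_on_diff[OF mD m\<Phi>]])
    have i2: "(\<lambda>x. 2 * (norm (D x))\<^sup>2 + 2 * (norm (\<Phi> x))\<^sup>2) integrable_on \<Omega>"
      by (intro integrable_add integrable_on_mult_right iD i\<Phi>)
    have iE: "(\<lambda>x. (norm (symm (D x - \<Phi> x)))\<^sup>2) integrable_on \<Omega>"
      by (rule meas_int[OF mE i2 _ dom(1)]) (simp add: sq_le2)
    have iL: "L integrable_on \<Omega>" unfolding L_def by (intro integrable_add i\<phi> i\<Phi> iE iC)
    have gL: "m * L x \<le> g x" for x
    proof -
      have a1: "ce * (norm (symm (D x - \<Phi> x)))\<^sup>2 \<le> tact Ce (symm (D x - \<Phi> x)) \<bullet> symm (D x - \<Phi> x)"
        using ce(2) symm_Sym3 by blast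
      have a2: "0 \<le> tact Cc (skew (D x - \<Phi> x)) \<bullet> skew (D x - \<Phi> x)" using cc skew_so3 by blast
      have a3: "0 \<le> tact Cmicro (symm (\<Phi> x)) \<bullet> symm (\<Phi> x)" using cm symm_Sym3 by blast
      have a4: "k * cL * (norm (CP x))\<^sup>2 \<le> \<mu> * Lc\<^sup>2 * (tact Laniso (CP x) \<bullet> CP x)"
        using mult_left_mono[OF cL(2)[of "CP x"], of k] k unfolding k_def by (simp add: mult.assoc)
      have b: "m * (norm (\<phi> x))\<^sup>2 \<le> \<rho> * (\<phi> x \<bullet> \<phi> x)" "m * (norm (\<Phi> x))\<^sup>2 \<le> J * (\<Phi> x \<bullet> \<Phi> x)"
        "m * (norm (symm (D x - \<Phi> x)))\<^sup>2 \<le> ce * (norm (symm (D x - \<Phi> x)))\<^sup>2"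
        "m * (norm (CP x))\<^sup>2 \<le> k * cL * (norm (CP x))\<^sup>2"
        using m by (auto simp: power2_norm_eq_inner[symmetric] intro!: mult_right_mono)
      show ?thesis unfolding L_def g_def using a1 a2 a3 a4 b by (simp add: algebra_simps)
    qed
    have I1: "m * integral \<Omega> L \<le> integral \<Omega> g"
    proof -
      have "integral \<Omega> (\<lambda>x. m * L x) \<le> integral \<Omega> g" by (rule integral_le[OF integrable_on_mult_right[OF iL] ig gL])
      moreover have "m * integral \<Omega> L = integral \<Omega> (\<lambda>x. m * L x)" by (rule integral_mult[OF iL])
      ultimately show ?thesis by linarith
    qed
    let ?I\<phi> = "integral \<Omega> (\<lambda>x. (norm (\<phi> x))\<^sup>2)" and ?ID = "integral \<Omega> (\<lambda>x. (norm (D x))\<^sup>2)"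
    let ?I\<Phi> = "integral \<Omega> (\<lambda>x. (norm (\<Phi> x))\<^sup>2)" and ?IC = "integral \<Omega> (\<lambda>x. (norm (CP x))\<^sup>2)"
    let ?IE = "integral \<Omega> (\<lambda>x. (norm (symm (D x - \<Phi> x)))\<^sup>2)"
    have IL: "integral \<Omega> L = ?I\<phi> + ?I\<Phi> + ?IE + ?IC" unfolding L_def
      by (simp add: Henstock_Kurzweil_Integration.integral_add integrable_add i\<phi> i\<Phi> iE iC)
    have kD: "?ID \<le> 8 * integral \<Omega> (\<lambda>x. (norm (symm (D x)))\<^sup>2)" by (rule korn_H01[OF H dom(1)])
    have iSD: "(\<lambda>x. (norm (symm (D x)))\<^sup>2) integrable_on \<Omega>"
      by (rule meas_int[OF meas_symm_sq[OF mD] iD _ dom(1)]) (simp add: norm_symm_le power_mono)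
    have i3: "(\<lambda>x. 2 * (norm (symm (D x - \<Phi> x)))\<^sup>2 + 2 * (norm (\<Phi> x))\<^sup>2) integrable_on \<Omega>"
      by (intro integrable_add integrable_on_mult_right iE i\<Phi>)
    have "integral \<Omega> (\<lambda>x. (norm (symm (D x)))\<^sup>2) \<le> integral \<Omega> (\<lambda>x. 2 * (norm (symm (D x - \<Phi> x)))\<^sup>2 + 2 * (norm (\<Phi> x))\<^sup>2)"
    proof (rule integral_le[OF iSD i3])
      fix x
      have "symm (D x) = symm (D x - \<Phi> x) + symm (\<Phi> x)" by (simp add: symm_diff)
      hence "(norm (symm (D x)))\<^sup>2 \<le> 2 * (norm (symm (D x - \<Phi> x)))\<^sup>2 + 2 * (norm (symm (\<Phi> x)))\<^sup>2"
        using sq_tri[of "symm (D x - \<Phi> x)" "symm (\<Phi> x)"] by simp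
      also have "\<dots> \<le> 2 * (norm (symm (D x - \<Phi> x)))\<^sup>2 + 2 * (norm (\<Phi> x))\<^sup>2"
        using norm_symm_le[of "\<Phi> x"] by (simp add: power_mono)
      finally show "(norm (symm (D x)))\<^sup>2 \<le> 2 * (norm (symm (D x - \<Phi> x)))\<^sup>2 + 2 * (norm (\<Phi> x))\<^sup>2" .
    qed
    also have "\<dots> = 2 * ?IE + 2 * ?I\<Phi>"
      by (simp add: Henstock_Kurzweil_Integration.integral_add integrable_on_mult_right iE i\<Phi>)
    finally have sD: "integral \<Omega> (\<lambda>x. (norm (symm (D x)))\<^sup>2) \<le> 2 * ?IE + 2 * ?I\<Phi>" .
    have nn: "0 \<le> ?I\<phi>" "0 \<le> ?I\<Phi>" "0 \<le> ?IC" "0 \<le> ?IE"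
      using integral_nonneg[OF i\<phi>] integral_nonneg[OF i\<Phi>] integral_nonneg[OF iC] integral_nonneg[OF iE] by auto
    have "?I\<phi> + ?ID + ?I\<Phi> + ?IC \<le> 17 * (?I\<phi> + ?I\<Phi> + ?IE + ?IC)" 
    proof -
      have "?ID \<le> 16 * ?IE + 16 * ?I\<Phi>" using kD sD by linarith
      thus ?thesis using nn arith17 by blast
    qed
    hence "c * (?I\<phi> + ?ID + ?I\<Phi> + ?IC) \<le> c * (17 * (?I\<phi> + ?I\<Phi> + ?IE + ?IC))"
      using c(1) by (simp add: mult_left_mono)
    also have "\<dots> = (17 * c) * (?I\<phi> + ?I\<Phi> + ?IE + ?IC)" by (simp only: mult.assoc mult.left_commute)
    also have "\<dots> = m * integral \<Omega> L" using c(2) IL by simp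
    also have "\<dots> \<le> integral \<Omega> g" by (rule I1)
    finally show "c * (?I\<phi> + ?ID + ?I\<Phi> + ?IC) \<le> W1 \<Omega> \<rho> J \<mu> Lc Ce Cc Cmicro Laniso \<phi> D \<Phi> CP \<phi> D \<Phi> CP"
      using W by simp
  qed
qed


end
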